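(* Let $M$ and $M'$ be two stable matchings in an instance $I$ of SPA-S, and let $M^\land$ be the assignment defined from $M,M'$ in the context. If a project $p_j$ is undersubscribed in $M^\land$, then $p_j$ is undersubscribed in at least one of $M$ and $M'$.
   Context: An instance $I$ of SPA-S consists of a finite set $\mathcal{S}$ of students, a finite set $\mathcal{P}$ of projects and a finite set $\mathcal{L}$ of lecturers. Each student $s_i$ ranks a subset $A_i\subseteq\mathcal{P}$ (its acceptable projects) in strict order. Each project is offered by exactly one lecturer; lecturer $l_k$ offers a nonempty set $P_k\subseteq\mathcal{P}$, the $P_k$ partitioning $\mathcal{P}$. Each lecturer $l_k$ ranks in strict order the students who find at least one project of $P_k$ acceptable. Projects have capacities $c_j\in\mathbb{Z}^+$, lecturers have capacities $d_k\in\mathbb{Z}^+$ with $\max\{c_j:p_j\in P_k\}\le d_k\le\sum\{c_j:p_j\in P_k\}$. A pair $(s_i,p_j)$, $p_j$ offered by $l_k$, is acceptable if $p_j\in A_i$ and $s_i$ is on $l_k$'s list. A matching $M$ is a set of acceptable pairs with each student in at most one pair, $|M(p_j)|\le c_j$, $|M(l_k)|\le d_k$, where for an assignment $M$ (a set of acceptable pairs), $M(s_i)$, $M(p_j)$, $M(l_k)$ denote the project of $s_i$, the students assigned to $p_j$, and the students assigned to projects of $l_k$. Undersubscribed/full means fewer than/exactly capacity many assigned students. An acceptable pair $(s_i,p_j)\notin M$ ($p_j$ offered by $l_k$) blocks $M$ if ($s_i$ is unassigned or prefers $p_j$ to $M(s_i)$) and one of: (P1) $p_j$ and $l_k$ undersubscribed;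 (P2) $p_j$ undersubscribed, $l_k$ full, $s_i\in M(l_k)$; (P3) $p_j$ undersubscribed, $l_k$ full, $l_k$ prefers $s_i$ to the worst student of $M(l_k)$; (P4) $p_j$ full and $l_k$ prefers $s_i$ to the worst student of $M(p_j)$. $M$ is stable if it has no blocking pair. Given stable matchings $M,M'$, $M^\land$ is the assignment in which each student unassigned in both $M$ and $M'$ is unassigned, each student assigned to the same project in both is assigned to that project, and every other student is assigned to the better (in her preference) of her projects in $M$ and $M'$. *)

theory Defs
  imports Main
begin

text \<open>A s: acceptable projects of student s.
  sp s p q: student s strictly prefers p to q (a strict total order on A s).
  lec p: the lecturer offering p.
  lp l s t: lecturer l strictly prefers s to t (a strict total order on l's list).
  c p, d l: capacities.\<close>

definition strict_total_on :: "'a set \<Rightarrow> ('a \<Rightarrow> 'a \<Rightarrow> bool) \<Rightarrow> bool" where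
  "strict_total_on X r \<longleftrightarrow>
     (\<forall>x\<in>X. \<not> r x x) \<and>
     (\<forall>x\<in>X. \<forall>y\<in>X. \<forall>z\<in>X. r x y \<longrightarrow> r y z \<longrightarrow> r x z) \<and>
     (\<forall>x\<in>X. \<forall>y\<in>X. x \<noteq> y \<longrightarrow> r x y \<or> r y x) \<and>
     (\<forall>x y. r x y \<longrightarrow> x \<in> X \<and> y \<in> X)"

definition offered :: "'p set \<Rightarrow> ('p \<Rightarrow> 'l) \<Rightarrow> 'l \<Rightarrow> 'p set" where
  "offered P lec l = {p \<in> P. lec p = l}"

definition lec_list :: "'s set \<Rightarrow> 'p set \<Rightarrow> ('s \<Rightarrow> 'p set) \<Rightarrow> ('p \<Rightarrow> 'l) \<Rightarrow> 'l \<Rightarrow> 's set" where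
  "lec_list S P A lec l = {s \<in> S. A s \<inter> offered P lec l \<noteq> {}}"

definition spa_instance ::
  "'s set \<Rightarrow> 'p set \<Rightarrow> 'l set \<Rightarrow> ('s \<Rightarrow> 'p set) \<Rightarrow> ('s \<Rightarrow> 'p \<Rightarrow> 'p \<Rightarrow> bool)
   \<Rightarrow> ('p \<Rightarrow> 'l) \<Rightarrow> ('l \<Rightarrow> 's \<Rightarrow> 's \<Rightarrow> bool) \<Rightarrow> ('p \<Rightarrow> nat) \<Rightarrow> ('l \<Rightarrow> nat) \<Rightarrow> bool" where
  "spa_instance S P L A sp lec lp c d \<longleftrightarrow>
     finite S \<and> finite P \<and> finite L \<and>
     (\<forall>s\<in>S. A s \<subseteq> P \<and> strict_total_on (A s) (sp s)) \<and>
     (\<forall>p\<in>P. lec p \<in> L \<and> c p > 0) \<and>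
     (\<forall>l\<in>L. offered P lec l \<noteq> {} \<and> d l > 0 \<and>
        strict_total_on (lec_list S P A lec l) (lp l) \<and>
        (\<forall>p\<in>offered P lec l. c p \<le> d l) \<and>
        d l \<le> (\<Sum>p\<in>offered P lec l. c p))"

definition acceptable ::
  "'s set \<Rightarrow> 'p set \<Rightarrow> ('s \<Rightarrow> 'p set) \<Rightarrow> ('p \<Rightarrow> 'l) \<Rightarrow> 's \<Rightarrow> 'p \<Rightarrow> bool" where
  "acceptable S P A lec s p \<longleftrightarrow> s \<in> S \<and> p \<in> P \<and> p \<in> A s \<and> s \<in> lec_list S P A lec (lec p)"

definition students_of_p :: "('s \<times> 'p) set \<Rightarrow> 'p \<Rightarrow> 's set" where
  "students_of_p M p = {s. (s, p) \<in> M}"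

definition students_of_l :: "('s \<times> 'p) set \<Rightarrow> ('p \<Rightarrow> 'l) \<Rightarrow> 'l \<Rightarrow> 's set" where
  "students_of_l M lec l = {s. \<exists>p. (s, p) \<in> M \<and> lec p = l}"

definition is_assigned :: "('s \<times> 'p) set \<Rightarrow> 's \<Rightarrow> bool" where
  "is_assigned M s \<longleftrightarrow> (\<exists>p. (s, p) \<in> M)"

definition matching ::
  "'s set \<Rightarrow> 'p set \<Rightarrow> ('s \<Rightarrow> 'p set) \<Rightarrow> ('p \<Rightarrow> 'l) \<Rightarrow> ('p \<Rightarrow> nat) \<Rightarrow> ('l \<Rightarrow> nat)
   \<Rightarrow> ('s \<times> 'p) set \<Rightarrow> bool" where
  "matching S P A lec c d M \<longleftrightarrow>
     (\<forall>(s, p)\<in>M. acceptable S P A lec s p) \<and>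
     (\<forall>s p q. (s, p) \<in> M \<longrightarrow> (s, q) \<in> M \<longrightarrow> p = q) \<and>
     (\<forall>p. card (students_of_p M p) \<le> c p) \<and>
     (\<forall>l. card (students_of_l M lec l) \<le> d l)"

definition prefers_to_worst :: "('s \<Rightarrow> 's \<Rightarrow> bool) \<Rightarrow> 's \<Rightarrow> 's set \<Rightarrow> bool" where
  "prefers_to_worst r s X \<longleftrightarrow>
     (\<exists>w\<in>X. (\<forall>t\<in>X. t \<noteq> w \<longrightarrow> r t w) \<and> r s w)"

definition blocking ::
  "'s set \<Rightarrow> 'p set \<Rightarrow> ('s \<Rightarrow> 'p set) \<Rightarrow> ('s \<Rightarrow> 'p \<Rightarrow> 'p \<Rightarrow> bool)
   \<Rightarrow> ('p \<Rightarrow> 'l) \<Rightarrow> ('l \<Rightarrow> 's \<Rightarrow> 's \<Rightarrow> bool) \<Rightarrow> ('p \<Rightarrow> nat) \<Rightarrow> ('l \<Rightarrow> nat)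
   \<Rightarrow> ('s \<times> 'p) set \<Rightarrow> 's \<Rightarrow> 'p \<Rightarrow> bool" where
  "blocking S P A sp lec lp c d M s p \<longleftrightarrow>
     (let l = lec p; Mp = students_of_p M p; Ml = students_of_l M lec l in
     acceptable S P A lec s p \<and> (s, p) \<notin> M \<and>
     (\<not> is_assigned M s \<or> (\<exists>q. (s, q) \<in> M \<and> sp s p q)) \<and>
     ((card Mp < c p \<and> card Ml < d l) \<or>
      (card Mp < c p \<and> card Ml = d l \<and> s \<in> Ml) \<or>
      (card Mp < c p \<and> card Ml = d l \<and> prefers_to_worst (lp l) s Ml) \<or>
      (card Mp = c p \<and> prefers_to_worst (lp l) s Mp)))"

definition stable ::
  "'s set \<Rightarrow> 'p set \<Rightarrow> ('s \<Rightarrow> 'p set) \<Rightarrow> ('s \<Rightarrow> 'p \<Rightarrow> 'p \<Rightarrow> bool)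
   \<Rightarrow> ('p \<Rightarrow> 'l) \<Rightarrow> ('l \<Rightarrow> 's \<Rightarrow> 's \<Rightarrow> bool) \<Rightarrow> ('p \<Rightarrow> nat) \<Rightarrow> ('l \<Rightarrow> nat)
   \<Rightarrow> ('s \<times> 'p) set \<Rightarrow> bool" where
  "stable S P A sp lec lp c d M \<longleftrightarrow>
     matching S P A lec c d M \<and> (\<forall>s p. \<not> blocking S P A sp lec lp c d M s p)"

text \<open>M-wedge: each student gets the better of her projects in M and M'
  (the common one if equal; unassigned if unassigned in both; if assigned in only one
  of them, that project, the paper's convention that any project beats being unassigned).\<close>
definition meet_assignment ::
  "('s \<Rightarrow> 'p \<Rightarrow> 'p \<Rightarrow> bool) \<Rightarrow> ('s \<times> 'p) set \<Rightarrow> ('s \<times> 'p) set \<Rightarrow> ('s \<times> 'p) set" where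
  "meet_assignment sp M M' =
     {(s, p). ((s, p) \<in> M \<and> (s, p) \<in> M') \<or>
              ((s, p) \<in> M \<and> \<not> is_assigned M' s) \<or>
              ((s, p) \<in> M' \<and> \<not> is_assigned M s) \<or>
              ((s, p) \<in> M \<and> (\<exists>q. (s, q) \<in> M' \<and> sp s p q)) \<or>
              ((s, p) \<in> M' \<and> (\<exists>q. (s, q) \<in> M \<and> sp s p q))}"

end

theory Submission
  imports Defs
begin

lemma sto_mem: "strict_total_on X r \<Longrightarrow> r x y \<Longrightarrow> x \<in> X \<and> y \<in> X"
  unfolding strict_total_on_def by blast
lemma sto_irr: "strict_total_on X r \<Longrightarrow> \<not> r x x"
  unfolding strict_total_on_def by blast
lemma sto_trans: "strict_total_on X r \<Longrightarrow> r x y \<Longrightarrow> r y z \<Longrightarrow> r x z"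
  unfolding strict_total_on_def by blast
lemma sto_asym: "strict_total_on X r \<Longrightarrow> r x y \<Longrightarrow> \<not> r y x"
  using sto_irr sto_trans by metis
lemma sto_total: "strict_total_on X r \<Longrightarrow> x \<in> X \<Longrightarrow> y \<in> X \<Longrightarrow> x \<noteq> y \<Longrightarrow> r x y \<or> r y x"
  unfolding strict_total_on_def by blast

lemma sto_worst:
  assumes st: "strict_total_on X r" and "finite Y" "Y \<noteq> {}" "Y \<subseteq> X"
  shows "\<exists>w\<in>Y. \<forall>t\<in>Y. t \<noteq> w \<longrightarrow> r t w"
  using assms(2,3,4)
proof (induction Y rule: finite_ne_induct)
  case (singleton x) then show ?case by auto
next
  case (insert x F)
  then obtain w where w: "w \<in> F" "\<forall>t\<in>F. t \<noteq> w \<longrightarrow> r t w" by auto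
  show ?case
  proof (cases "r x w")
    case True then show ?thesis using w by auto
  next
    case False
    have "x \<noteq> w" using insert w by auto
    then have "r w x" using False sto_total[OF st, of x w] insert w by auto
    then show ?thesis using w sto_trans[OF st] by (metis insert_iff)
  qed
qed

lemma ptw_intro:
  assumes st: "strict_total_on X r" and "finite Y" "Y \<subseteq> X" "v \<in> Y" "r t v"
  shows "prefers_to_worst r t Y"
proof -
  obtain w where w: "w \<in> Y" "\<forall>t\<in>Y. t \<noteq> w \<longrightarrow> r t w"
    using sto_worst[OF st, of Y] assms by auto
  have "r t w" using w assms sto_trans[OF st] by metis
  then show ?thesis unfolding prefers_to_worst_def using w by auto
qed

lemma ptw_elim:
  assumes st: "strict_total_on X r" and "finite Y" "Y \<noteq> {}" "Y \<subseteq> X" "t \<in> X" "t \<notin> Y"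
    and "\<not> prefers_to_worst r t Y"
  shows "\<forall>y\<in>Y. r y t"
proof -
  obtain w where w: "w \<in> Y" "\<forall>t\<in>Y. t \<noteq> w \<longrightarrow> r t w"
    using sto_worst[OF st, of Y] assms by auto
  have "\<not> r t w" using assms(7) w unfolding prefers_to_worst_def by auto
  moreover have "t \<noteq> w" using w assms by auto
  ultimately have "r w t" using sto_total[OF st, of t w] w assms by auto
  then show ?thesis using w sto_trans[OF st] by metis
qed

lemma card_UN_mono:
  assumes "finite Q" "\<And>q. q \<in> Q \<Longrightarrow> finite (G q)"
    "\<And>q1 q2. q1 \<in> Q \<Longrightarrow> q2 \<in> Q \<Longrightarrow> q1 \<noteq> q2 \<Longrightarrow> G q1 \<inter> G q2 = {}"
    "\<And>q. q \<in> Q \<Longrightarrow> card (F q) \<le> card (G q)"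
  shows "card (\<Union>q\<in>Q. F q) \<le> card (\<Union>q\<in>Q. G q)"
proof -
  have "card (\<Union>q\<in>Q. F q) \<le> (\<Sum>q\<in>Q. card (F q))" by (rule card_UN_le[OF assms(1)])
  also have "\<dots> \<le> (\<Sum>q\<in>Q. card (G q))" by (rule sum_mono, rule assms(4))
  also have "\<dots> = card (\<Union>q\<in>Q. G q)" using card_UN_disjoint[OF assms(1)] assms(2,3) by metis
  finally show ?thesis .
qed

definition better :: "('s \<times> 'p) set \<Rightarrow> ('s \<times> 'p) set \<Rightarrow> ('s \<Rightarrow> 'p \<Rightarrow> 'p \<Rightarrow> bool) \<Rightarrow> 's \<Rightarrow> bool" where
  "better M M' sp s \<longleftrightarrow> is_assigned M' s \<and>
     (\<not> is_assigned M s \<or> (\<exists>p q. (s, p) \<in> M \<and> (s, q) \<in> M' \<and> sp s q p))"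


context
  fixes S :: "'s set" and P :: "'p set" and L :: "'l set" and A sp
    and lec :: "'p \<Rightarrow> 'l" and lp c d
  assumes inst: "spa_instance S P L A sp lec lp c d"
begin

lemma finS: "finite S" and finP: "finite P" and finL: "finite L"
  using inst unfolding spa_instance_def by auto

lemma stS: "s \<in> S \<Longrightarrow> strict_total_on (A s) (sp s)"
  using inst unfolding spa_instance_def by auto
lemma AP: "s \<in> S \<Longrightarrow> A s \<subseteq> P"
  using inst unfolding spa_instance_def by auto
lemma lecL: "p \<in> P \<Longrightarrow> lec p \<in> L" and cpos: "p \<in> P \<Longrightarrow> c p > 0"
  using inst unfolding spa_instance_def by auto
lemma dpos: "k \<in> L \<Longrightarrow> d k > 0"
  using inst unfolding spa_instance_def by auto
lemma stL: "k \<in> L \<Longrightarrow> strict_total_on (lec_list S P A lec k) (lp k)"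
  using inst unfolding spa_instance_def by auto

lemma m_acc: "matching S P A lec c d N \<Longrightarrow> (s, p) \<in> N \<Longrightarrow> acceptable S P A lec s p"
  unfolding matching_def by auto
lemma m_acc2: "matching S P A lec c d N \<Longrightarrow> (s, p) \<in> N \<Longrightarrow> s \<in> S \<and> p \<in> P \<and> p \<in> A s \<and> s \<in> lec_list S P A lec (lec p)"
  using m_acc unfolding acceptable_def by blast
lemma m_uniq: "matching S P A lec c d N \<Longrightarrow> (s, p) \<in> N \<Longrightarrow> (s, q) \<in> N \<Longrightarrow> p = q"
  unfolding matching_def by blast
lemma m_cp: "matching S P A lec c d N \<Longrightarrow> card (students_of_p N p) \<le> c p"
  unfolding matching_def by blast
lemma m_dl: "matching S P A lec c d N \<Longrightarrow> card (students_of_l N lec k) \<le> d k"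
  unfolding matching_def by blast
lemma fin_p: "matching S P A lec c d N \<Longrightarrow> finite (students_of_p N p)"
  by (rule finite_subset[OF _ finS]) (auto simp: students_of_p_def dest: m_acc2)
lemma fin_l: "matching S P A lec c d N \<Longrightarrow> finite (students_of_l N lec k)"
  by (rule finite_subset[OF _ finS]) (auto simp: students_of_l_def dest: m_acc2)
lemma sl_list: "matching S P A lec c d N \<Longrightarrow> students_of_l N lec k \<subseteq> lec_list S P A lec k"
  by (auto simp: students_of_l_def dest: m_acc2)
lemma sp_sl: "students_of_p N q \<subseteq> students_of_l N lec (lec q)"
  by (auto simp: students_of_l_def students_of_p_def)

lemma sp_irr: "s \<in> S \<Longrightarrow> \<not> sp s p p" using stS sto_irr by metis
lemma sp_asym: "s \<in> S \<Longrightarrow> sp s p q \<Longrightarrow> \<not> sp s q p" using stS sto_asym by metis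

lemma better_not_same:
  assumes mM: "matching S P A lec c d M" and mM': "matching S P A lec c d M'"
    and b: "better M M' sp v" and vq: "(v, q) \<in> M'"
  shows "(v, q) \<notin> M"
proof
  assume vqM: "(v, q) \<in> M"
  then have "is_assigned M v" unfolding is_assigned_def by auto
  then obtain p q' where "(v, p) \<in> M" "(v, q') \<in> M'" "sp v q' p" using b unfolding better_def by auto
  then have "sp v q q" using m_uniq[OF mM] m_uniq[OF mM'] vq vqM by metis
  then show False using sp_irr m_acc2[OF mM vqM] by blast
qed

lemma better_pref:
  assumes mM: "matching S P A lec c d M" and mM': "matching S P A lec c d M'"
    and b: "better M M' sp v" and vq: "(v, q) \<in> M'"
  shows "\<not> is_assigned M v \<or> (\<exists>q'. (v, q') \<in> M \<and> sp v q q')"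
  using b vq m_uniq[OF mM'] unfolding better_def by metis

lemma notbetter_pref:
  assumes mM: "matching S P A lec c d M" and mM': "matching S P A lec c d M'"
    and nb: "\<not> better M M' sp t" and tr: "(t, r) \<in> M" and tr': "(t, r) \<notin> M'"
  shows "\<not> is_assigned M' t \<or> (\<exists>q'. (t, q') \<in> M' \<and> sp t r q')"
proof (cases "is_assigned M' t")
  case True
  then obtain q' where q': "(t, q') \<in> M'" unfolding is_assigned_def by auto
  have "\<not> sp t q' r" using nb True q' tr unfolding better_def by auto
  moreover have "q' \<noteq> r" using q' tr' by auto
  moreover have "t \<in> S" "r \<in> A t" "q' \<in> A t" using m_acc2[OF mM tr] m_acc2[OF mM' q'] by auto
  ultimately have "sp t r q'" using sto_total[OF stS, of t r q'] by auto
  then show ?thesis using q' by auto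
qed auto

end

context
  fixes S :: "'s set" and P :: "'p set" and L :: "'l set" and A sp
    and lec :: "'p \<Rightarrow> 'l" and lp c d
  assumes inst: "spa_instance S P L A sp lec lp c d"
begin

lemma fact1:
  assumes stM: "stable S P A sp lec lp c d M" and mM': "matching S P A lec c d M'"
    and b: "better M M' sp v" and vq: "(v, q) \<in> M'"
  shows "(v, q) \<notin> M \<and>
    ((card (students_of_p M q) = c q \<and> (\<forall>t\<in>students_of_p M q. lp (lec q) t v)) \<or>
     (card (students_of_p M q) < c q \<and> card (students_of_l M lec (lec q)) = d (lec q) \<and>
      v \<notin> students_of_l M lec (lec q) \<and> (\<forall>t\<in>students_of_l M lec (lec q). lp (lec q) t v)))"
proof -
  have mM: "matching S P A lec c d M" using stM unfolding stable_def by auto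
  have nb: "\<not> blocking S P A sp lec lp c d M v q" using stM unfolding stable_def by auto
  have nq: "(v, q) \<notin> M" using better_not_same[OF inst mM mM' b vq] .
  have acc: "acceptable S P A lec v q" using m_acc[OF inst mM' vq] .
  have pr: "\<not> is_assigned M v \<or> (\<exists>q'. (v, q') \<in> M \<and> sp v q q')"
    using better_pref[OF inst mM mM' b vq] .
  define k where "k = lec q"
  define Mp where "Mp = students_of_p M q"
  define Ml where "Ml = students_of_l M lec k"
  have qP: "q \<in> P" and vl: "v \<in> lec_list S P A lec k"
    using m_acc2[OF inst mM' vq] k_def by auto
  have kL: "k \<in> L" using lecL[OF inst qP] k_def by simp
  have st: "strict_total_on (lec_list S P A lec k) (lp k)" using stL[OF inst kL] .
  have none: "\<not> ((card Mp < c q \<and> card Ml < d k) \<or>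
      (card Mp < c q \<and> card Ml = d k \<and> v \<in> Ml) \<or>
      (card Mp < c q \<and> card Ml = d k \<and> prefers_to_worst (lp k) v Ml) \<or>
      (card Mp = c q \<and> prefers_to_worst (lp k) v Mp))"
    using nb nq acc pr unfolding blocking_def Let_def Mp_def Ml_def k_def by blast
  have vMp: "v \<notin> Mp" using nq unfolding Mp_def students_of_p_def by auto
  have finMp: "finite Mp" using fin_p[OF inst mM] Mp_def by simp
  have finMl: "finite Ml" using fin_l[OF inst mM] Ml_def by simp
  have MpL: "Mp \<subseteq> lec_list S P A lec k" using subset_trans[OF sp_sl[OF inst, of M q] sl_list[OF inst mM, of "lec q"]] Mp_def k_def by simp
  have MlL: "Ml \<subseteq> lec_list S P A lec k" using sl_list[OF inst mM] Ml_def by blast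
  show ?thesis
  proof (cases "card Mp < c q")
    case True
    have "card Ml \<le> d k" using m_dl[OF inst mM] Ml_def by simp
    then have eq: "card Ml = d k" using True none by auto
    then have ne: "Ml \<noteq> {}" using dpos[OF inst kL] by auto
    have vMl: "v \<notin> Ml" using True eq none by auto
    have "\<forall>t\<in>Ml. lp k t v"
      using ptw_elim[OF st finMl ne MlL vl vMl] True eq none by auto
    then show ?thesis using nq True eq vMl Mp_def Ml_def k_def by auto
  next
    case False
    then have eq: "card Mp = c q" using m_cp[OF inst mM, of q] Mp_def by simp
    then have ne: "Mp \<noteq> {}" using cpos[OF inst qP] by auto
    have "\<forall>t\<in>Mp. lp k t v"
      using ptw_elim[OF st finMp ne MpL vl vMp] eq none by auto
    then show ?thesis using nq eq Mp_def k_def by auto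
  qed
qed

end

context
  fixes S :: "'s set" and P :: "'p set" and L :: "'l set" and A sp
    and lec :: "'p \<Rightarrow> 'l" and lp c d
  assumes inst: "spa_instance S P L A sp lec lp c d"
begin

lemma fact2:
  assumes stM': "stable S P A sp lec lp c d M'" and mM: "matching S P A lec c d M"
    and vq: "(v, q) \<in> M'"
    and wv: "\<forall>t\<in>students_of_p M q. lp (lec q) t v"
    and tq: "(t, q) \<in> M" and tq': "(t, q) \<notin> M'"
  shows "better M M' sp t"
proof (rule ccontr)
  assume nbt: "\<not> better M M' sp t"
  have mM': "matching S P A lec c d M'" using stM' unfolding stable_def by auto
  have nb: "\<not> blocking S P A sp lec lp c d M' t q" using stM' unfolding stable_def by auto
  have acc: "acceptable S P A lec t q" using m_acc[OF inst mM tq] .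
  have pr: "\<not> is_assigned M' t \<or> (\<exists>q'. (t, q') \<in> M' \<and> sp t q q')"
    using notbetter_pref[OF inst mM mM' nbt tq tq'] .
  define k where "k = lec q"
  define Mp where "Mp = students_of_p M' q"
  define Ml where "Ml = students_of_l M' lec k"
  have qP: "q \<in> P" using m_acc2[OF inst mM tq] by auto
  have kL: "k \<in> L" using lecL[OF inst qP] k_def by simp
  have st: "strict_total_on (lec_list S P A lec k) (lp k)" using stL[OF inst kL] .
  have tv: "lp k t v" using wv tq k_def unfolding students_of_p_def by auto
  have none: "\<not> ((card Mp < c q \<and> card Ml < d k) \<or>
      (card Mp < c q \<and> card Ml = d k \<and> t \<in> Ml) \<or>
      (card Mp < c q \<and> card Ml = d k \<and> prefers_to_worst (lp k) t Ml) \<or>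
      (card Mp = c q \<and> prefers_to_worst (lp k) t Mp))"
    using nb tq' acc pr unfolding blocking_def Let_def Mp_def Ml_def k_def by blast
  have finMp: "finite Mp" using fin_p[OF inst mM'] Mp_def by simp
  have finMl: "finite Ml" using fin_l[OF inst mM'] Ml_def by simp
  have MpL: "Mp \<subseteq> lec_list S P A lec k"
    using subset_trans[OF sp_sl[OF inst, of M' q] sl_list[OF inst mM', of "lec q"]] Mp_def k_def by simp
  have MlL: "Ml \<subseteq> lec_list S P A lec k" using sl_list[OF inst mM'] Ml_def by blast
  have vMp: "v \<in> Mp" using vq Mp_def students_of_p_def by fastforce
  have vMl: "v \<in> Ml" using vq Ml_def k_def students_of_l_def by fastforce
  show False
  proof (cases "card Mp < c q")
    case True
    have "card Ml \<le> d k" using m_dl[OF inst mM'] Ml_def by simp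
    then have eq: "card Ml = d k" using True none by auto
    have "prefers_to_worst (lp k) t Ml" using ptw_intro[OF st finMl MlL vMl tv] .
    then show False using True eq none by auto
  next
    case False
    then have eq: "card Mp = c q" using m_cp[OF inst mM', of q] Mp_def by simp
    have "prefers_to_worst (lp k) t Mp" using ptw_intro[OF st finMp MpL vMp tv] .
    then show False using eq none by auto
  qed
qed

lemma fact3:
  assumes stM': "stable S P A sp lec lp c d M'" and mM: "matching S P A lec c d M"
    and vq: "(v, q) \<in> M'" and kq: "lec q = k"
    and wv: "\<forall>t\<in>students_of_l M lec k. lp k t v"
    and tr: "(t, r) \<in> M" and kr: "lec r = k" and tr': "(t, r) \<notin> M'"
    and nbt: "\<not> better M M' sp t"
  shows "card (students_of_p M' r) = c r \<and> (\<forall>u\<in>students_of_p M' r. lp k u t)"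
proof -
  have mM': "matching S P A lec c d M'" using stM' unfolding stable_def by auto
  have nb: "\<not> blocking S P A sp lec lp c d M' t r" using stM' unfolding stable_def by auto
  have acc: "acceptable S P A lec t r" using m_acc[OF inst mM tr] .
  have pr: "\<not> is_assigned M' t \<or> (\<exists>q'. (t, q') \<in> M' \<and> sp t r q')"
    using notbetter_pref[OF inst mM mM' nbt tr tr'] .
  define Mp where "Mp = students_of_p M' r"
  define Ml where "Ml = students_of_l M' lec k"
  have rP: "r \<in> P" and tl: "t \<in> lec_list S P A lec k" using m_acc2[OF inst mM tr] kr by auto
  have kL: "k \<in> L" using lecL[OF inst rP] kr by simp
  have st: "strict_total_on (lec_list S P A lec k) (lp k)" using stL[OF inst kL] .
  have tv: "lp k t v" using wv tr kr unfolding students_of_l_def by auto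
  have none: "\<not> ((card Mp < c r \<and> card Ml < d k) \<or>
      (card Mp < c r \<and> card Ml = d k \<and> t \<in> Ml) \<or>
      (card Mp < c r \<and> card Ml = d k \<and> prefers_to_worst (lp k) t Ml) \<or>
      (card Mp = c r \<and> prefers_to_worst (lp k) t Mp))"
    using nb tr' acc pr kr unfolding blocking_def Let_def Mp_def Ml_def by blast
  have finMp: "finite Mp" using fin_p[OF inst mM'] Mp_def by simp
  have finMl: "finite Ml" using fin_l[OF inst mM'] Ml_def by simp
  have MpL: "Mp \<subseteq> lec_list S P A lec k"
    using subset_trans[OF sp_sl[OF inst, of M' r] sl_list[OF inst mM', of "lec r"]] Mp_def kr by simp
  have MlL: "Ml \<subseteq> lec_list S P A lec k" using sl_list[OF inst mM'] Ml_def by blast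
  have vMl: "v \<in> Ml" using vq Ml_def kq students_of_l_def by fastforce
  have tMp: "t \<notin> Mp" using tr' Mp_def students_of_p_def by fastforce
  have full: "card Mp = c r"
  proof (rule ccontr)
    assume "card Mp \<noteq> c r"
    then have lt: "card Mp < c r" using m_cp[OF inst mM', of r] Mp_def by simp
    have "card Ml \<le> d k" using m_dl[OF inst mM'] Ml_def by simp
    then have eq: "card Ml = d k" using lt none by auto
    have "prefers_to_worst (lp k) t Ml" using ptw_intro[OF st finMl MlL vMl tv] .
    then show False using lt eq none by auto
  qed
  then have ne: "Mp \<noteq> {}" using cpos[OF inst rP] by auto
  have "\<forall>u\<in>Mp. lp k u t" using ptw_elim[OF st finMp ne MpL tl tMp] full none by auto
  then show ?thesis using full Mp_def by auto
qed

lemma fact3b: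
  assumes stM: "stable S P A sp lec lp c d M" and stM': "stable S P A sp lec lp c d M'"
    and vq: "(v, q) \<in> M'" and kq: "lec q = k"
    and wv: "\<forall>t\<in>students_of_l M lec k. lp k t v"
    and tr: "(t, r) \<in> M" and kr: "lec r = k" and tr': "(t, r) \<notin> M'"
    and nbt: "\<not> better M M' sp t"
    and ur: "(u, r) \<in> M'" and ur': "(u, r) \<notin> M"
  shows "\<not> better M M' sp u"
proof
  assume bu: "better M M' sp u"
  have mM: "matching S P A lec c d M" using stM unfolding stable_def by auto
  have mM': "matching S P A lec c d M'" using stM' unfolding stable_def by auto
  have "\<forall>x\<in>students_of_p M' r. lp k x t" using fact3[OF stM' mM vq kq wv tr kr tr' nbt] by auto
  then have ut: "lp k u t" using ur unfolding students_of_p_def by auto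
  have tMp: "t \<in> students_of_p M r" and tMl: "t \<in> students_of_l M lec (lec r)"
    using tr unfolding students_of_p_def students_of_l_def by auto
  have "lp k t u" using fact1[OF inst stM mM' bu ur] tMp tMl kr by auto
  moreover have "k \<in> L" using lecL[OF inst] m_acc2[OF inst mM tr] kr by auto
  ultimately show False using ut sto_asym[OF stL[OF inst]] by blast
qed

end

context
  fixes S :: "'s set" and P :: "'p set" and L :: "'l set" and A sp
    and lec :: "'p \<Rightarrow> 'l" and lp c d
  assumes inst: "spa_instance S P L A sp lec lp c d"
begin

lemma SL:
  fixes k :: 'l
  assumes stM: "stable S P A sp lec lp c d M" and stM': "stable S P A sp lec lp c d M'"
  defines "In1 \<equiv> {s. better M M' sp s \<and> s \<in> students_of_l M' lec k}"
    and "Out1 \<equiv> {s. better M M' sp s \<and> s \<in> students_of_l M lec k}"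
  shows "card In1 \<le> card Out1 \<and>
    ((\<exists>p s u. lec p = k \<and> (s, p) \<in> M \<and> (s, p) \<notin> M' \<and> better M M' sp s \<and>
       (u, p) \<in> M' \<and> (u, p) \<notin> M \<and> \<not> better M M' sp u) \<longrightarrow> card In1 < card Out1)"
proof -
  have mM: "matching S P A lec c d M" using stM unfolding stable_def by auto
  have mM': "matching S P A lec c d M'" using stM' unfolding stable_def by auto
  define Ml where "Ml = students_of_l M lec k"
  define Ml' where "Ml' = students_of_l M' lec k"
  define F where "F r = students_of_p M r - students_of_p M' r" for r
  define G where "G r = students_of_p M' r - students_of_p M r" for r
  have finMl: "finite Ml" using fin_l[OF inst mM] Ml_def by simp
  have finMl': "finite Ml'" using fin_l[OF inst mM'] Ml'_def by simp
  have finF: "finite (F r)" for r using fin_p[OF inst mM] F_def by simp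
  have finG: "finite (G r)" for r using fin_p[OF inst mM'] G_def by simp
  have In1_sub: "In1 \<subseteq> Ml'" and Out1_sub: "Out1 \<subseteq> Ml" using In1_def Out1_def Ml_def Ml'_def by auto
  have finIn1: "finite In1" using finite_subset[OF In1_sub finMl'] .
  have finOut1: "finite Out1" using finite_subset[OF Out1_sub finMl] .
  have Fmem: "t \<in> F r \<longleftrightarrow> (t, r) \<in> M \<and> (t, r) \<notin> M'" for t r
    unfolding F_def students_of_p_def by auto
  have Gmem: "t \<in> G r \<longleftrightarrow> (t, r) \<in> M' \<and> (t, r) \<notin> M" for t r
    unfolding G_def students_of_p_def by auto
  have cardFG: "card (F r) \<le> card (G r)" if "card (students_of_p M r) \<le> card (students_of_p M' r)" for r
  proof -
    have "card (F r) = card (students_of_p M r) - card (students_of_p M r \<inter> students_of_p M' r)"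
      unfolding F_def by (rule card_Diff_subset_Int) (use fin_p[OF inst mM] in auto)
    moreover have "card (G r) = card (students_of_p M' r) - card (students_of_p M' r \<inter> students_of_p M r)"
      unfolding G_def by (rule card_Diff_subset_Int) (use fin_p[OF inst mM] in auto)
    ultimately show ?thesis using that by (simp add: Int_commute)
  qed
  have cardGF: "card (G r) \<le> card (F r)" if "card (students_of_p M' r) \<le> card (students_of_p M r)" for r
  proof -
    have "card (F r) = card (students_of_p M r) - card (students_of_p M r \<inter> students_of_p M' r)"
      unfolding F_def by (rule card_Diff_subset_Int) (use fin_p[OF inst mM] in auto)
    moreover have "card (G r) = card (students_of_p M' r) - card (students_of_p M' r \<inter> students_of_p M r)"
      unfolding G_def by (rule card_Diff_subset_Int) (use fin_p[OF inst mM] in auto)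
    ultimately show ?thesis using that by (simp add: Int_commute)
  qed
  have disjF: "F r1 \<inter> F r2 = {}" if "r1 \<noteq> r2" for r1 r2
    using that m_uniq[OF inst mM] Fmem by blast
  have disjG: "G r1 \<inter> G r2 = {}" if "r1 \<noteq> r2" for r1 r2
    using that m_uniq[OF inst mM'] Gmem by blast
  show ?thesis
  proof (cases "\<exists>v q. better M M' sp v \<and> (v, q) \<in> M' \<and> lec q = k \<and> card (students_of_p M q) < c q")
    case True
    then obtain v q where v: "better M M' sp v" "(v, q) \<in> M'" "lec q = k" "card (students_of_p M q) < c q"
      by auto
    have f1: "card Ml = d k" "\<forall>t\<in>Ml. lp k t v"
      using fact1[OF inst stM mM' v(1,2)] v(3,4) Ml_def by auto
    define C where "C = {s. \<exists>p. (s, p) \<in> M \<and> (s, p) \<in> M' \<and> lec p = k}"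
    define In2 where "In2 = Ml' - C - {s. better M M' sp s}"
    define Out2 where "Out2 = Ml - C - {s. better M M' sp s}"
    have Cb: "\<not> better M M' sp s" if "s \<in> C" for s
      using that better_not_same[OF inst mM mM'] unfolding C_def by blast
    have CMl: "C \<subseteq> Ml" "C \<subseteq> Ml'" unfolding C_def Ml_def Ml'_def students_of_l_def by auto
    have eq1: "Ml' = C \<union> In1 \<union> In2" using CMl In1_sub unfolding In2_def In1_def Ml'_def by auto
    have eq2: "Ml = C \<union> Out1 \<union> Out2" using CMl Out1_sub unfolding Out2_def Out1_def Ml_def by auto
    have finC: "finite C" using finite_subset[OF CMl(1) finMl] .
    have finIn2: "finite In2" using finMl' In2_def by simp
    have finOut2: "finite Out2" using finMl Out2_def by simp
    have c1: "card Ml' = card C + card In1 + card In2"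
    proof -
      have "card Ml' = card (C \<union> In1) + card In2"
        unfolding eq1 by (rule card_Un_disjoint) (use finC finIn1 finIn2 In2_def In1_def in auto)
      moreover have "card (C \<union> In1) = card C + card In1"
        by (rule card_Un_disjoint) (use finC finIn1 Cb In1_def in auto)
      ultimately show ?thesis by simp
    qed
    have c2: "card Ml = card C + card Out1 + card Out2"
    proof -
      have "card Ml = card (C \<union> Out1) + card Out2"
        unfolding eq2 by (rule card_Un_disjoint) (use finC finOut1 finOut2 Out2_def Out1_def in auto)
      moreover have "card (C \<union> Out1) = card C + card Out1"
        by (rule card_Un_disjoint) (use finC finOut1 Cb Out1_def in auto)
      ultimately show ?thesis by simp
    qed
    have c3: "card Ml' \<le> card Ml" using m_dl[OF inst mM', of k] f1 Ml'_def by simp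
    define R where "R = {r \<in> P. lec r = k \<and> (\<exists>t\<in>Out2. (t, r) \<in> M)}"
    have finR: "finite R" using finP[OF inst] R_def by simp
    have Rprop: "card (students_of_p M' r) = c r \<and> (\<forall>u\<in>G r. \<not> better M M' sp u)" if rR: "r \<in> R" for r
    proof -
      obtain t where t: "t \<in> Out2" "(t, r) \<in> M" "lec r = k" using rR R_def by auto
      have tr': "(t, r) \<notin> M'" using t unfolding Out2_def C_def by auto
      have nbt: "\<not> better M M' sp t" using t Out2_def by auto
      have wv: "\<forall>t\<in>students_of_l M lec k. lp k t v" using f1 Ml_def by simp
      show ?thesis
        using fact3[OF inst stM' mM v(2,3) wv t(2,3) tr' nbt]
          fact3b[OF inst stM stM' v(2,3) wv t(2,3) tr' nbt] Gmem by blast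
    qed
    have sub1: "Out2 \<subseteq> (\<Union>r\<in>R. F r)"
    proof
      fix t assume t: "t \<in> Out2"
      then obtain r where r: "(t, r) \<in> M" "lec r = k" unfolding Out2_def Ml_def students_of_l_def by auto
      have "(t, r) \<notin> M'" using t r unfolding Out2_def C_def by auto
      moreover have "r \<in> R" using r t m_acc2[OF inst mM r(1)] R_def by auto
      ultimately show "t \<in> (\<Union>r\<in>R. F r)" using r Fmem by auto
    qed
    have sub2: "(\<Union>r\<in>R. G r) \<subseteq> In2"
    proof
      fix u assume "u \<in> (\<Union>r\<in>R. G r)"
      then obtain r where r: "r \<in> R" "u \<in> G r" by auto
      have ur: "(u, r) \<in> M'" "(u, r) \<notin> M" using r Gmem by auto
      have "lec r = k" using r R_def by auto
      then have "u \<in> Ml'" using ur Ml'_def students_of_l_def by fastforce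
      moreover have "u \<notin> C" using ur m_uniq[OF inst mM'] unfolding C_def by blast
      moreover have "\<not> better M M' sp u" using Rprop r by auto
      ultimately show "u \<in> In2" using In2_def by auto
    qed
    have mono: "card (\<Union>r\<in>R. F r) \<le> card (\<Union>r\<in>R. G r)"
    proof (rule card_UN_mono[OF finR finG disjG])
      fix r assume "r \<in> R"
      then show "card (F r) \<le> card (G r)" using cardFG Rprop m_cp[OF inst mM, of r] by simp
    qed (auto)
    have finUF: "finite (\<Union>r\<in>R. F r)" using finR finF by auto
    have o2: "card Out2 \<le> card (\<Union>r\<in>R. F r)" using card_mono[OF finUF sub1] .
    have o3: "card (\<Union>r\<in>R. G r) \<le> card In2" using card_mono[OF finIn2 sub2] .
    have main: "card In1 \<le> card Out1" using c1 c2 c3 o2 o3 mono by linarith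
    moreover have "card In1 < card Out1" if H: "\<exists>p s u. lec p = k \<and> (s, p) \<in> M \<and> (s, p) \<notin> M' \<and> better M M' sp s \<and>
       (u, p) \<in> M' \<and> (u, p) \<notin> M \<and> \<not> better M M' sp u"
    proof -
      obtain p s u where H: "lec p = k" "(s, p) \<in> M" "(s, p) \<notin> M'" "better M M' sp s"
        "(u, p) \<in> M'" "(u, p) \<notin> M" "\<not> better M M' sp u" using H by blast
      have uIn2: "u \<in> In2"
      proof -
        have "u \<in> Ml'" using H Ml'_def students_of_l_def by fastforce
        moreover have "u \<notin> C" using H m_uniq[OF inst mM'] unfolding C_def by blast
        ultimately show ?thesis using H In2_def by auto
      qed
      have "card Out2 < card In2"
      proof (cases "p \<in> R")
        case True
        have "s \<in> (\<Union>r\<in>R. F r)" using True H Fmem by auto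
        moreover have "s \<notin> Out2" using H Out2_def by auto
        ultimately have "Out2 \<subset> (\<Union>r\<in>R. F r)" using sub1 by auto
        then have "card Out2 < card (\<Union>r\<in>R. F r)" using psubset_card_mono[OF finUF] by blast
        then show ?thesis using mono o3 by linarith
      next
        case False
        have "u \<notin> (\<Union>r\<in>R. G r)" using False H Gmem m_uniq[OF inst mM'] by blast
        then have "(\<Union>r\<in>R. G r) \<subset> In2" using sub2 uIn2 by auto
        then have "card (\<Union>r\<in>R. G r) < card In2" using psubset_card_mono[OF finIn2] by blast
        then show ?thesis using mono o2 by linarith
      qed
      then show ?thesis using c1 c2 c3 by linarith
    qed
    ultimately show ?thesis by blast
  next
    case False
    have Aprop: "card (students_of_p M q) = c q \<and> (\<forall>t\<in>students_of_p M q. lp k t v)"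
      if "better M M' sp v" "(v, q) \<in> M'" "lec q = k" for v q
      using fact1[OF inst stM mM' that(1,2)] that False by auto
    define Q where "Q = {q \<in> P. lec q = k \<and> (\<exists>v. better M M' sp v \<and> (v, q) \<in> M')}"
    have finQ: "finite Q" using finP[OF inst] Q_def by simp
    have sub1: "In1 \<subseteq> (\<Union>q\<in>Q. G q)"
    proof
      fix s assume s: "s \<in> In1"
      then obtain q where q: "(s, q) \<in> M'" "lec q = k" unfolding In1_def students_of_l_def by auto
      have b: "better M M' sp s" using s In1_def by auto
      have "(s, q) \<notin> M" using better_not_same[OF inst mM mM' b q(1)] .
      moreover have "q \<in> Q" using q b m_acc2[OF inst mM' q(1)] Q_def by auto
      ultimately show "s \<in> (\<Union>q\<in>Q. G q)" using q Gmem by auto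
    qed
    have sub2: "(\<Union>q\<in>Q. F q) \<subseteq> Out1"
    proof
      fix t assume "t \<in> (\<Union>q\<in>Q. F q)"
      then obtain q where q: "q \<in> Q" "t \<in> F q" by auto
      obtain v where v: "better M M' sp v" "(v, q) \<in> M'" "lec q = k" using q Q_def by auto
      have tq: "(t, q) \<in> M" "(t, q) \<notin> M'" using q Fmem by auto
      have "better M M' sp t" using fact2[OF inst stM' mM v(2) _ tq] Aprop[OF v] v(3) by auto
      moreover have "t \<in> Ml" using tq v(3) Ml_def students_of_l_def by fastforce
      ultimately show "t \<in> Out1" using Out1_def Ml_def by auto
    qed
    have mono: "card (\<Union>q\<in>Q. G q) \<le> card (\<Union>q\<in>Q. F q)"
    proof (rule card_UN_mono[OF finQ finF disjF])
      fix q assume "q \<in> Q"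
      then obtain v where v: "better M M' sp v" "(v, q) \<in> M'" "lec q = k" using Q_def by auto
      show "card (G q) \<le> card (F q)" using cardGF Aprop[OF v] m_cp[OF inst mM', of q] by simp
    qed (auto)
    have finUG: "finite (\<Union>q\<in>Q. G q)" using finQ finG by auto
    have o1: "card In1 \<le> card (\<Union>q\<in>Q. G q)" using card_mono[OF finUG sub1] .
    have o3: "card (\<Union>q\<in>Q. F q) \<le> card Out1" using card_mono[OF finOut1 sub2] .
    have main: "card In1 \<le> card Out1" using o1 o3 mono by linarith
    moreover have "card In1 < card Out1" if H: "\<exists>p s u. lec p = k \<and> (s, p) \<in> M \<and> (s, p) \<notin> M' \<and> better M M' sp s \<and>
       (u, p) \<in> M' \<and> (u, p) \<notin> M \<and> \<not> better M M' sp u"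
    proof -
      obtain p s u where H: "lec p = k" "(s, p) \<in> M" "(s, p) \<notin> M'" "better M M' sp s"
        "(u, p) \<in> M'" "(u, p) \<notin> M" "\<not> better M M' sp u" using H by blast
      show ?thesis
      proof (cases "p \<in> Q")
        case True
        have "u \<in> (\<Union>q\<in>Q. G q)" using True H Gmem by auto
        moreover have "u \<notin> In1" using H In1_def by auto
        ultimately have "In1 \<subset> (\<Union>q\<in>Q. G q)" using sub1 by auto
        then have "card In1 < card (\<Union>q\<in>Q. G q)" using psubset_card_mono[OF finUG] by blast
        then show ?thesis using mono o3 by linarith
      next
        case False
        have "s \<notin> (\<Union>q\<in>Q. F q)" using False H Fmem m_uniq[OF inst mM] by blast
        moreover have "s \<in> Out1" using H Out1_def students_of_l_def by fastforce
        ultimately have "(\<Union>q\<in>Q. F q) \<subset> Out1" using sub2 by auto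
        then have "card (\<Union>q\<in>Q. F q) < card Out1" using psubset_card_mono[OF finOut1] by blast
        then show ?thesis using mono o1 by linarith
      qed
    qed
    ultimately show ?thesis by blast
  qed
qed

end

theorem lemma6:
  assumes inst: "spa_instance S P L A sp lec lp c d"
    and stM: "stable S P A sp lec lp c d M"
    and stM': "stable S P A sp lec lp c d M'"
    and pj: "p \<in> P"
    and under: "card (students_of_p (meet_assignment sp M M') p) < c p"
  shows "card (students_of_p M p) < c p \<or> card (students_of_p M' p) < c p"
proof (rule ccontr)
  assume neg: "\<not> (card (students_of_p M p) < c p \<or> card (students_of_p M' p) < c p)"
  have mM: "matching S P A lec c d M" using stM unfolding stable_def by auto
  have mM': "matching S P A lec c d M'" using stM' unfolding stable_def by auto
  have fullM: "card (students_of_p M p) = c p" using neg m_cp[OF inst mM, of p] by simp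
  have fullM': "card (students_of_p M' p) = c p" using neg m_cp[OF inst mM', of p] by simp
  define W where "W = students_of_p (meet_assignment sp M M') p"
  have Wmem: "x \<in> W \<longleftrightarrow> (((x, p) \<in> M \<and> (x, p) \<in> M') \<or>
              ((x, p) \<in> M \<and> \<not> is_assigned M' x) \<or>
              ((x, p) \<in> M' \<and> \<not> is_assigned M x) \<or>
              ((x, p) \<in> M \<and> (\<exists>q. (x, q) \<in> M' \<and> sp x p q)) \<or>
              ((x, p) \<in> M' \<and> (\<exists>q. (x, q) \<in> M \<and> sp x p q)))" for x
    unfolding W_def students_of_p_def meet_assignment_def by simp
  have finW: "finite W"
    by (rule finite_subset[of _ "students_of_p M p \<union> students_of_p M' p"])
       (use Wmem fin_p[OF inst mM] fin_p[OF inst mM'] in \<open>auto simp: students_of_p_def\<close>)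
  obtain s where s: "(s, p) \<in> M" "s \<notin> W"
  proof -
    have lt: "card W < card (students_of_p M p)" using under fullM W_def by simp
    have "\<not> students_of_p M p \<subseteq> W"
    proof
      assume "students_of_p M p \<subseteq> W"
      then have "card (students_of_p M p) \<le> card W" by (rule card_mono[OF finW])
      then show False using lt by simp
    qed
    then show ?thesis using that unfolding students_of_p_def by auto
  qed
  obtain u where u: "(u, p) \<in> M'" "u \<notin> W"
  proof -
    have lt: "card W < card (students_of_p M' p)" using under fullM' W_def by simp
    have "\<not> students_of_p M' p \<subseteq> W"
    proof
      assume "students_of_p M' p \<subseteq> W"
      then have "card (students_of_p M' p) \<le> card W" by (rule card_mono[OF finW])
      then show False using lt by simp
    qed
    then show ?thesis using that unfolding students_of_p_def by auto
  qed
  have sp': "(s, p) \<notin> M'" using s by (simp add: Wmem)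
  have "is_assigned M' s" using s by (simp add: Wmem)
  then obtain q where q: "(s, q) \<in> M'" unfolding is_assigned_def by blast
  have "\<not> sp s p q" using s q by (simp add: Wmem)
  moreover have "q \<noteq> p" using q sp' by auto
  moreover have "s \<in> S" "p \<in> A s" "q \<in> A s" using m_acc2[OF inst mM s(1)] m_acc2[OF inst mM' q] by auto
  ultimately have "sp s q p" using sto_total[OF stS[OF inst], of s q p] by auto
  then have bs: "better M M' sp s" using s q unfolding better_def is_assigned_def by auto
  have up': "(u, p) \<notin> M" using u by (simp add: Wmem)
  have "is_assigned M u" using u by (simp add: Wmem)
  then obtain q' where q': "(u, q') \<in> M" unfolding is_assigned_def by blast
  have "\<not> sp u p q'" using u q' by (simp add: Wmem)
  have nbu: "\<not> better M M' sp u"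
  proof
    assume "better M M' sp u"
    then obtain p1 q1 where "(u, p1) \<in> M" "(u, q1) \<in> M'" "sp u q1 p1"
      using q' unfolding better_def is_assigned_def by blast
    then have "sp u p q'" using m_uniq[OF inst mM] m_uniq[OF inst mM'] q' u by metis
    then show False using \<open>\<not> sp u p q'\<close> by simp
  qed
  define In1 where "In1 k = {s. better M M' sp s \<and> s \<in> students_of_l M' lec k}" for k
  define Out1 where "Out1 k = {s. better M M' sp s \<and> s \<in> students_of_l M lec k}" for k
  have le: "card (In1 k) \<le> card (Out1 k)" for k
    using SL[OF inst stM stM', of k] In1_def Out1_def by simp
  have lt: "card (In1 (lec p)) < card (Out1 (lec p))"
    proof -
    have "\<exists>p' s' u'. lec p' = lec p \<and> (s', p') \<in> M \<and> (s', p') \<notin> M' \<and> better M M' sp s' \<and>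
       (u', p') \<in> M' \<and> (u', p') \<notin> M \<and> \<not> better M M' sp u'"
      using s(1) sp' bs u(1) up' nbu by blast
    then show ?thesis using SL[OF inst stM stM', of "lec p"] unfolding In1_def Out1_def by blast
  qed
  define B where "B = {s. better M M' sp s}"
  have finB: "finite B"
    by (rule finite_subset[OF _ finS[OF inst]])
       (auto simp: B_def better_def is_assigned_def dest: m_acc2[OF inst mM'])
  have finL: "finite L" using finL[OF inst] .
  have lL: "lec p \<in> L" using lecL[OF inst pj] .
  have BU: "B = (\<Union>k\<in>L. In1 k)"
  proof
    show "B \<subseteq> (\<Union>k\<in>L. In1 k)"
    proof
      fix x assume "x \<in> B"
      then obtain q where "(x, q) \<in> M'" "better M M' sp x" unfolding B_def better_def is_assigned_def by auto
      moreover then have "lec q \<in> L" using m_acc2[OF inst mM'] lecL[OF inst] by blast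
      ultimately show "x \<in> (\<Union>k\<in>L. In1 k)" unfolding In1_def students_of_l_def by blast
    qed
  qed (auto simp: B_def In1_def)
  have OU: "(\<Union>k\<in>L. Out1 k) \<subseteq> B" by (auto simp: B_def Out1_def)
  have finIn: "finite (In1 k)" for k by (rule finite_subset[OF _ finB]) (auto simp: In1_def B_def)
  have finOut: "finite (Out1 k)" for k by (rule finite_subset[OF _ finB]) (auto simp: Out1_def B_def)
  have "card B = (\<Sum>k\<in>L. card (In1 k))"
    unfolding BU by (rule card_UN_disjoint[OF finL])
      (use finIn m_uniq[OF inst mM'] in \<open>auto simp: In1_def students_of_l_def\<close>)
  moreover have "card (\<Union>k\<in>L. Out1 k) = (\<Sum>k\<in>L. card (Out1 k))"
    by (rule card_UN_disjoint[OF finL])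
      (use finOut m_uniq[OF inst mM] in \<open>auto simp: Out1_def students_of_l_def\<close>)
  moreover have "card (\<Union>k\<in>L. Out1 k) \<le> card B" using card_mono[OF finB OU] .
  moreover have "(\<Sum>k\<in>L. card (In1 k)) < (\<Sum>k\<in>L. card (Out1 k))"
    by (rule sum_strict_mono_ex1[OF finL]) (use le lt lL in auto)
  ultimately show False by linarith
qed

end
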